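(* With the setup in the context, assume $Q>2m$ and $Q\ge1$. Choose $N$ so that $v_1:=v\in N$ and every non-fixed vertex $x$ with $\mathrm{dist}(v_1,x)<\mathrm{dist}(v_1',x)$ lies in $N$ (vertices with $\mathrm{dist}(v_1,x)=\mathrm{dist}(v_1',x)$ may be placed arbitrarily). Label $N=\{v_1,\dots,v_k\}$ and define $y\in\mathbb{R}^k$ by $$y_i=\begin{cases}Q^{-\mathrm{dist}(v_1,v_i)} & \text{if } \mathrm{dist}(v_1,v_i)<\mathrm{dist}(v_1',v_i),\\ 0 & \text{if } \mathrm{dist}(v_1,v_i)=\mathrm{dist}(v_1',v_i).\end{cases}$$ Then the second largest eigenvalue $\lambda_2$ of $H$ satisfies $$\lambda_2\ \ge\ Q-\frac{1+\sum_{i\ne 1}\big(\deg_{N\cup\sigma N}(v_i)-1\big)y_i^2}{\sum_i y_i^2}.$$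
   Context: $G$ is a finite, simple, connected graph with vertex set $V$, maximum degree $m$, and an involution $\sigma$ (a bijection $V\to V$ with $\sigma\circ\sigma=\mathrm{id}$ such that $x\sim y$ implies $\sigma(x)\sim\sigma(y)$); write $x'=\sigma(x)$. Fix $v\in V$ with $v'\ne v$, and let $H=A_G+D_Q$ (adjacency matrix plus diagonal potential) with potential $Q$ at $v$ and $v'$ and $0$ elsewhere. $S=\{x: x'=x\}$ is the set of fixed vertices, $N$ is a set containing exactly one vertex from each pair $\{x,x'\}$ with $x\ne x'$, $|N|=k$, and $\sigma N=\{x':x\in N\}$. $\mathrm{dist}$ is graph distance and $\deg_{N\cup\sigma N}(v_i)$ is the number of neighbours of $v_i$ in $N\cup\sigma N$. The eigenvalues of $H$ are $\lambda_1\ge\lambda_2\ge\dots\ge\lambda_n$. *)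

theory Defs
  imports "Jordan_Normal_Form.Char_Poly" "HOL-Library.Multiset"
begin

definition simple_graph :: "nat \<Rightarrow> (nat \<Rightarrow> nat \<Rightarrow> bool) \<Rightarrow> bool" where
  "simple_graph n E \<longleftrightarrow> (\<forall>x y. E x y \<longrightarrow> x < n \<and> y < n) \<and> (\<forall>x y. E x y \<longrightarrow> E y x) \<and> (\<forall>x. \<not> E x x)"

text \<open>A walk with vertex list xs (length of the walk = length xs - 1).\<close>
fun is_walk :: "(nat \<Rightarrow> nat \<Rightarrow> bool) \<Rightarrow> nat list \<Rightarrow> bool" where
  "is_walk E [] = False"
| "is_walk E [x] = True"
| "is_walk E (x # y # zs) = (E x y \<and> is_walk E (y # zs))"

definition connected_graph :: "nat \<Rightarrow> (nat \<Rightarrow> nat \<Rightarrow> bool) \<Rightarrow> bool" where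
  "connected_graph n E \<longleftrightarrow> (\<forall>x<n. \<forall>y<n. \<exists>xs. is_walk E xs \<and> hd xs = x \<and> last xs = y)"

definition gdist :: "(nat \<Rightarrow> nat \<Rightarrow> bool) \<Rightarrow> nat \<Rightarrow> nat \<Rightarrow> nat" where
  "gdist E x y = (LEAST k. \<exists>xs. is_walk E xs \<and> hd xs = x \<and> last xs = y \<and> length xs = Suc k)"

definition degree_in :: "(nat \<Rightarrow> nat \<Rightarrow> bool) \<Rightarrow> nat set \<Rightarrow> nat \<Rightarrow> nat" where
  "degree_in E A x = card {u \<in> A. E x u}"

definition max_degree :: "nat \<Rightarrow> (nat \<Rightarrow> nat \<Rightarrow> bool) \<Rightarrow> nat" where
  "max_degree n E = Max ((\<lambda>x. degree_in E {0..<n} x) ` {0..<n})"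

definition graph_involution :: "nat \<Rightarrow> (nat \<Rightarrow> nat \<Rightarrow> bool) \<Rightarrow> (nat \<Rightarrow> nat) \<Rightarrow> bool" where
  "graph_involution n E \<sigma> \<longleftrightarrow> (\<forall>x<n. \<sigma> x < n \<and> \<sigma> (\<sigma> x) = x) \<and> (\<forall>x y. E x y \<longrightarrow> E (\<sigma> x) (\<sigma> y))"

definition Hmat :: "nat \<Rightarrow> (nat \<Rightarrow> nat \<Rightarrow> bool) \<Rightarrow> (nat \<Rightarrow> nat) \<Rightarrow> nat \<Rightarrow> real \<Rightarrow> real mat" where
  "Hmat n E \<sigma> v Q = mat n n (\<lambda>(i, j). (if E i j then 1 else 0) + (if i = j \<and> (i = v \<or> i = \<sigma> v) then Q else 0))"

text \<open>Eigenvalues with multiplicity, listed in decreasing order: lambda_1 \<ge> lambda_2 \<ge> ...\<close>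
definition eigenvalues_desc :: "real mat \<Rightarrow> real list" where
  "eigenvalues_desc A = rev (sorted_list_of_multiset (proots (char_poly A)))"

definition pair_selection :: "nat \<Rightarrow> (nat \<Rightarrow> nat) \<Rightarrow> nat set \<Rightarrow> bool" where
  "pair_selection n \<sigma> N \<longleftrightarrow> N \<subseteq> {x. x < n \<and> \<sigma> x \<noteq> x} \<and>
     (\<forall>x<n. \<sigma> x \<noteq> x \<longrightarrow> (x \<in> N \<longleftrightarrow> \<sigma> x \<notin> N))"

end

theory Submission
  imports Defs "Jordan_Normal_Form.Schur_Decomposition"
begin


lemma real_sym_eigenvalue:
  fixes A :: "real mat"
  assumes A: "A \<in> carrier_mat n n" and sym: "transpose_mat A = A" and n: "n > 0"
  shows "\<exists>e. eigenvalue A e"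
proof -
  define Ac :: "complex mat" where "Ac = of_real_hom.mat_hom A"
  have Ac: "Ac \<in> carrier_mat n n" using A unfolding Ac_def by auto
  have cp: "char_poly Ac = map_poly of_real (char_poly A)"
    unfolding Ac_def by (rule of_real_hom.char_poly_hom[OF A])
  from char_poly_factorized[OF Ac] obtain as where
    as: "char_poly Ac = (\<Prod>a\<leftarrow>as. [:- a, 1:])" "length as = n" by blast
  define a where "a = as ! 0"
  have "a \<in> set as" using as n unfolding a_def by auto
  hence "poly (char_poly Ac) a = 0" unfolding as(1)
    by (induct as) (auto simp: poly_prod_list)
  hence "eigenvalue Ac a" using eigenvalue_root_char_poly[OF Ac] by simp
  from find_eigenvector[OF Ac this] obtain z where ev: "eigenvector Ac z a" by blast
  hence z: "z \<in> carrier_vec n" "z \<noteq> 0\<^sub>v n" "Ac *\<^sub>v z = a \<cdot>\<^sub>v z"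
    unfolding eigenvector_def using Ac by auto
  define s where "s = (\<Sum>i<n. cnj (z $ i) * (\<Sum>j<n. complex_of_real (A $$ (i,j)) * z $ j))"
  define r where "r = (\<Sum>i<n. cnj (z $ i) * z $ i)"
  have Asym: "A $$ (i,j) = A $$ (j,i)" if "i < n" "j < n" for i j
    using sym that A by (metis carrier_matD index_transpose_mat(1))
  have "cnj s = (\<Sum>i<n. z $ i * (\<Sum>j<n. complex_of_real (A $$ (i,j)) * cnj (z $ j)))"
    unfolding s_def by (simp add: sum_distrib_left)
  also have "\<dots> = (\<Sum>i<n. \<Sum>j<n. z $ i * complex_of_real (A $$ (i,j)) * cnj (z $ j))"
    by (simp add: sum_distrib_left mult.assoc)
  also have "\<dots> = (\<Sum>j<n. \<Sum>i<n. z $ i * complex_of_real (A $$ (i,j)) * cnj (z $ j))"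
    by (rule sum.swap)
  also have "\<dots> = s"
    unfolding s_def sum_distrib_left
    by (intro sum.cong refl) (auto simp: Asym mult.commute mult.left_commute)
  finally have sreal: "cnj s = s" .
  have "s = a * r"
  proof -
    have "(Ac *\<^sub>v z) $ i = (\<Sum>j<n. complex_of_real (A $$ (i,j)) * z $ j)" if "i < n" for i
      using that A z(1) unfolding Ac_def
      by (auto simp: mult_mat_vec_def scalar_prod_def intro!: sum.cong)
    hence "s = (\<Sum>i<n. cnj (z $ i) * (a * z $ i))" unfolding s_def using z(3) z(1)
      by (intro sum.cong) auto
    thus ?thesis unfolding r_def by (simp add: sum_distrib_left mult.left_commute)
  qed
  have rr: "r = complex_of_real (\<Sum>i<n. ((Re (z $ i))^2 + (Im (z $ i))^2))"
    unfolding r_def by (simp add: complex_mult_cnj mult.commute)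
  have "\<exists>i<n. z $ i \<noteq> 0" using z by (metis carrier_vecD eq_vecI index_zero_vec(1,2))
  then obtain i0 where i0: "i0 < n" "z $ i0 \<noteq> 0" by blast
  have rpos: "(\<Sum>i<n. ((Re (z $ i))^2 + (Im (z $ i))^2)) > 0"
    by (rule sum_pos2[of _ i0]) (use i0 in \<open>auto simp: complex_eq_iff add_pos_nonneg add_nonneg_pos\<close>)
  have "Im s = Im a * (\<Sum>i<n. ((Re (z $ i))^2 + (Im (z $ i))^2))" using \<open>s = a * r\<close> rr by simp
  moreover have "Im s = 0" using sreal by (metis cnj.simps(2) neg_equal_zero)
  ultimately have ima: "Im a = 0" using rpos by simp
  have "poly (char_poly A) (Re a) = 0"
  proof -
    have "complex_of_real (poly (char_poly A) (Re a)) = poly (char_poly Ac) (complex_of_real (Re a))"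
      unfolding cp by (simp add: of_real_hom.poly_map_poly)
    also have "complex_of_real (Re a) = a" using ima by (simp add: complex_eq_iff)
    finally show ?thesis using \<open>poly (char_poly Ac) a = 0\<close> by simp
  qed
  thus ?thesis using eigenvalue_root_char_poly[OF A] by blast
qed


lemma real_conj_vec[simp]: "conjugate (v :: real vec) = v"
  by (rule eq_vecI) auto

lemma real_cscalar[simp]: "(v :: real vec) \<bullet>c w = v \<bullet> w"
  by simp

lemma quad_form_entry:
  fixes W A :: "real mat"
  assumes W: "W \<in> carrier_mat n n" and A: "A \<in> carrier_mat n n" and i: "i < n" and j: "j < n"
  shows "(transpose_mat W * A * W) $$ (i,j) = col W i \<bullet> (A *\<^sub>v col W j)"
proof -
  have "transpose_mat W * A * W = transpose_mat W * (A * W)"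
    using W A by (simp add: assoc_mult_mat[of _ n n _ n _ n])
  also have "\<dots> $$ (i,j) = row (transpose_mat W) i \<bullet> col (A * W) j"
    using W A i j by simp
  also have "\<dots> = col W i \<bullet> (A *\<^sub>v col W j)"
    using W A i j by (simp add: col_mult2 mult_mat_vec_def)
  finally show ?thesis .
qed

lemma real_spectral:
  fixes A :: "real mat"
  assumes "A \<in> carrier_mat n n" "transpose_mat A = A"
  shows "\<exists>Q. Q \<in> carrier_mat n n \<and> transpose_mat Q * Q = 1\<^sub>m n \<and> diagonal_mat (transpose_mat Q * A * Q)"
  using assms
proof (induct n arbitrary: A)
  case 0
  thus ?case by (intro exI[of _ "1\<^sub>m 0"]) (auto simp: diagonal_mat_def)
next
  case (Suc m A)
  let ?n = "Suc m"
  note A = Suc(2)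
  note sym = Suc(3)
  obtain e where "eigenvalue A e" using real_sym_eigenvalue[OF A sym] by auto
  from find_eigenvector[OF A this] obtain v0 where ev: "eigenvector A v0 e" by blast
  hence v0: "v0 \<in> carrier_vec ?n" "v0 \<noteq> 0\<^sub>v ?n" "A *\<^sub>v v0 = e \<cdot>\<^sub>v v0"
    unfolding eigenvector_def using A by auto
  have v0pos: "v0 \<bullet> v0 > 0" using conjugate_square_greater_0_vec[OF v0(1)] v0(2) by simp
  define v where "v = (1 / sqrt (v0 \<bullet> v0)) \<cdot>\<^sub>v v0"
  have v: "v \<in> carrier_vec ?n" unfolding v_def using v0 by simp
  have vv: "v \<bullet> v = 1" unfolding v_def using v0 v0pos
    by (simp add: smult_scalar_prod_distrib scalar_prod_smult_distrib)
  have vne: "v \<noteq> 0\<^sub>v ?n" using vv v by auto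
  have Av: "A *\<^sub>v v = e \<cdot>\<^sub>v v" unfolding v_def using v0 A
    by (simp add: mult_mat_vec smult_smult_assoc mult.commute)
  interpret cof_vec_space ?n "TYPE(real)" .
  define b where "b = basis_completion v"
  define ws where "ws = gram_schmidt ?n b"
  from basis_completion[OF v vne, folded b_def]
  have dist_b: "distinct b" and indep: "\<not> lin_dep (set b)" and b: "set b \<subseteq> carrier_vec ?n"
    and hdb: "hd b = v" and len_b: "length b = ?n" by auto
  from hdb len_b obtain vs where bv: "b = v # vs" by (cases b, auto)
  from gram_schmidt_result[OF b dist_b indep refl, folded ws_def]
  have ws: "set ws \<subseteq> carrier_vec ?n" "corthogonal ws" "length ws = ?n"
    by (auto simp: len_b)
  from gram_schmidt_hd[OF v, of vs, folded bv] have hdws: "hd ws = v" unfolding ws_def .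
  have ws0: "ws ! 0 = v" using hdws ws(3) by (cases ws) auto
  have wsc: "ws ! i \<in> carrier_vec ?n" if "i < ?n" for i using ws that by auto
  have wsorth: "ws ! i \<bullet> ws ! j = 0 \<longleftrightarrow> i \<noteq> j" if "i < ?n" "j < ?n" for i j
    using ws(2) that ws(3) unfolding corthogonal_def by simp
  have wspos: "ws ! i \<bullet> ws ! i > 0" if "i < ?n" for i
    using conjugate_square_ge_0_vec[of "ws ! i"] wsorth[OF that that] by simp
  define us where "us = map (\<lambda>w. (1 / sqrt (w \<bullet> w)) \<cdot>\<^sub>v w) ws"
  have us_len: "length us = ?n" unfolding us_def using ws by simp
  have usc: "us ! i \<in> carrier_vec ?n" if "i < ?n" for i
    unfolding us_def using wsc[OF that] that ws(3) by simp
  have us_ip: "us ! i \<bullet> us ! j = (if i = j then 1 else 0)" if "i < ?n" "j < ?n" for i j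
  proof -
    have "us ! i \<bullet> us ! j = (1 / sqrt (ws!i \<bullet> ws!i)) * (1 / sqrt (ws!j \<bullet> ws!j)) * (ws ! i \<bullet> ws ! j)"
      unfolding us_def using that ws(3) wsc[OF that(1)] wsc[OF that(2)]
      by (simp add: smult_scalar_prod_distrib scalar_prod_smult_distrib)
    thus ?thesis using wsorth[OF that] wspos[OF that(1)]
      by (cases "i = j") auto
  qed
  have us0: "us ! 0 = v" unfolding us_def using ws(3) ws0 vv by simp
  define W where "W = mat_of_cols ?n us"
  have W: "W \<in> carrier_mat ?n ?n" unfolding W_def using us_len mat_of_cols_carrier(1)[of ?n us] by simp
  have colW: "col W i = us ! i" if "i < ?n" for i
    unfolding W_def using that us_len usc[OF that] by simp
  have WW: "transpose_mat W * W = 1\<^sub>m ?n"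
    by (rule eq_matI) (use W in \<open>auto simp: colW us_ip\<close>)
  define A' where "A' = transpose_mat W * A * W"
  have A': "A' \<in> carrier_mat ?n ?n" unfolding A'_def using W A by auto
  have A'e: "A' $$ (i,j) = col W i \<bullet> (A *\<^sub>v col W j)" if "i < ?n" "j < ?n" for i j
    unfolding A'_def by (rule quad_form_entry[OF W A that])
  have A'sym: "A' $$ (i,j) = A' $$ (j,i)" if "i < ?n" "j < ?n" for i j
  proof -
    have "transpose_mat A' = A'"
    proof -
      have "transpose_mat (transpose_mat W * A * W) = transpose_mat W * transpose_mat (transpose_mat W * A)"
        using W A by (subst transpose_mult[of _ ?n ?n]) auto
      also have "transpose_mat (transpose_mat W * A) = transpose_mat A * W"
        using W A by (subst transpose_mult[of _ ?n ?n]) auto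
      also have "transpose_mat W * (transpose_mat A * W) = transpose_mat W * A * W"
        using W A sym by (simp add: assoc_mult_mat[of _ ?n ?n _ ?n _ ?n])
      finally show ?thesis unfolding A'_def .
    qed
    thus ?thesis using that A' by (metis carrier_matD index_transpose_mat(1))
  qed
  have A'0: "A' $$ (i,0) = (if i = 0 then e else 0)" if "i < ?n" for i
  proof -
    have "A' $$ (i,0) = us ! i \<bullet> (e \<cdot>\<^sub>v v)" using A'e[OF that] colW that us0 Av by simp
    also have "\<dots> = e * (us ! i \<bullet> us ! 0)" using usc[OF that] v us0
      by (simp add: scalar_prod_smult_distrib)
    finally show ?thesis using us_ip[OF that] by simp
  qed
  define A3 where "A3 = mat m m (\<lambda>(i,j). A' $$ (Suc i, Suc j))"
  define A1 where "A1 = mat 1 1 (\<lambda>_. e)"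
  have A3: "A3 \<in> carrier_mat m m" and A1: "A1 \<in> carrier_mat 1 1"
    unfolding A3_def A1_def by auto
  have A'b: "A' = four_block_mat A1 (0\<^sub>m 1 m) (0\<^sub>m m 1) A3"
  proof (rule eq_matI)
    fix i j assume i: "i < dim_row (four_block_mat A1 (0\<^sub>m 1 m) (0\<^sub>m m 1) A3)"
      and j: "j < dim_col (four_block_mat A1 (0\<^sub>m 1 m) (0\<^sub>m m 1) A3)"
    have i': "i < ?n" and j': "j < ?n" using i j A1 A3 by auto
    show "A' $$ (i, j) = four_block_mat A1 (0\<^sub>m 1 m) (0\<^sub>m m 1) A3 $$ (i, j)"
    proof (cases "i = 0")
      case True
      then show ?thesis using A'0[OF j'] A'sym[OF i' j'] i j A1 A3
        by (cases j) (auto simp: A1_def)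
    next
      case False
      then obtain i0 where i0: "i = Suc i0" by (cases i) auto
      show ?thesis
      proof (cases "j = 0")
        case True
        then show ?thesis using A'0[OF i'] i j A1 A3 i0 by auto
      next
        case False
        then obtain j0 where j0: "j = Suc j0" by (cases j) auto
        show ?thesis using i j A1 A3 i0 j0 by (auto simp: A3_def)
      qed
    qed
  qed (use A' A1 A3 in auto)
  have A3e: "A3 $$ (i,j) = A' $$ (Suc i, Suc j)" if "i < m" "j < m" for i j
    using that unfolding A3_def by simp
  have A3sym: "transpose_mat A3 = A3"
    by (rule eq_matI) (use A3 in \<open>auto simp: A3e A'sym\<close>)
  from Suc(1)[OF A3 A3sym] obtain Q3 where Q3: "Q3 \<in> carrier_mat m m"
    "transpose_mat Q3 * Q3 = 1\<^sub>m m" "diagonal_mat (transpose_mat Q3 * A3 * Q3)" by blast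
  define P where "P = four_block_mat (1\<^sub>m 1) (0\<^sub>m 1 m) (0\<^sub>m m 1) Q3"
  have P: "P \<in> carrier_mat ?n ?n" unfolding P_def using Q3 by auto
  have PT: "transpose_mat P = four_block_mat (1\<^sub>m 1) (0\<^sub>m 1 m) (0\<^sub>m m 1) (transpose_mat Q3)"
    unfolding P_def using Q3 by (subst transpose_four_block_mat[where ?nr1.0=1 and ?nc1.0=1 and ?nr2.0=m and ?nc2.0=m]) auto
  define Q where "Q = W * P"
  have Q: "Q \<in> carrier_mat ?n ?n" unfolding Q_def using W P by auto
  have QT: "transpose_mat Q = transpose_mat P * transpose_mat W"
    unfolding Q_def using W P by (simp add: transpose_mult)
  have "transpose_mat Q * Q = transpose_mat P * (transpose_mat W * W) * P"
    unfolding QT unfolding Q_def using W P by (simp add: assoc_mult_mat[of _ ?n ?n _ ?n _ ?n])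
  also have "\<dots> = transpose_mat P * P" using WW P by simp
  also have "\<dots> = 1\<^sub>m ?n" unfolding PT unfolding P_def using Q3
    by (subst mult_four_block_mat[where ?nr1.0=1 and ?n1.0=1 and ?nr2.0=m and ?n2.0=m and ?nc1.0=1 and ?nc2.0=m]) auto
  finally have QQ: "transpose_mat Q * Q = 1\<^sub>m ?n" .
  have "transpose_mat Q * A * Q = transpose_mat P * A' * P"
    unfolding QT unfolding Q_def A'_def using W P A by (simp add: assoc_mult_mat[of _ ?n ?n _ ?n _ ?n])
  also have "\<dots> = four_block_mat A1 (0\<^sub>m 1 m) (0\<^sub>m m 1) (transpose_mat Q3 * A3 * Q3)"
    unfolding PT unfolding P_def A'b using Q3 A1 A3
    apply (subst mult_four_block_mat[where ?nr1.0=1 and ?n1.0=1 and ?nr2.0=m and ?n2.0=m and ?nc1.0=1 and ?nc2.0=m], auto)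
    apply (subst mult_four_block_mat[where ?nr1.0=1 and ?n1.0=1 and ?nr2.0=m and ?n2.0=m and ?nc1.0=1 and ?nc2.0=m], auto)
    done
  finally have D: "transpose_mat Q * A * Q = four_block_mat A1 (0\<^sub>m 1 m) (0\<^sub>m m 1) (transpose_mat Q3 * A3 * Q3)" .
  have "diagonal_mat (transpose_mat Q * A * Q)"
  proof -
    have C: "transpose_mat Q3 * A3 * Q3 \<in> carrier_mat m m" using Q3 A3 by auto
    have dg: "\<And>i j. i < m \<Longrightarrow> j < m \<Longrightarrow> i \<noteq> j \<Longrightarrow> (transpose_mat Q3 * A3 * Q3) $$ (i,j) = 0"
      using Q3(3) C unfolding diagonal_mat_def by auto
    show ?thesis unfolding D diagonal_mat_def
    proof (intro allI impI)
      fix i j assume i: "i < dim_row (four_block_mat A1 (0\<^sub>m 1 m) (0\<^sub>m m 1) (transpose_mat Q3 * A3 * Q3))"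
        and j: "j < dim_col (four_block_mat A1 (0\<^sub>m 1 m) (0\<^sub>m m 1) (transpose_mat Q3 * A3 * Q3))"
        and ij: "i \<noteq> j"
      have i': "i < Suc m" and j': "j < Suc m" using i j C A1 by auto
      show "four_block_mat A1 (0\<^sub>m 1 m) (0\<^sub>m m 1) (transpose_mat Q3 * A3 * Q3) $$ (i, j) = 0"
        using i' j' ij C A1 dg[of "i - 1" "j - 1"] by auto
    qed
  qed
  thus ?case using Q QQ by blast

qed


lemma sorted_desc_second:
  fixes ds :: "real list"
  assumes i: "i < length ds" and j: "j < length ds" and ij: "i \<noteq> j"
    and di: "ds ! i \<ge> \<mu>" and dj: "ds ! j \<ge> \<mu>"
  shows "rev (sort ds) ! 1 \<ge> \<mu>"
proof (rule ccontr)
  assume neg: "\<not> rev (sort ds) ! 1 \<ge> \<mu>"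
  define L where "L = rev (sort ds)"
  have lenL: "length L = length ds" unfolding L_def by simp
  have sL: "sorted (rev L)" unfolding L_def by simp
  have le1: "L ! k \<le> L ! 1" if "1 \<le> k" "k < length L" for k
  proof -
    have "rev L ! (length L - 1 - k) \<le> rev L ! (length L - 1 - 1)"
      using sorted_nth_mono[OF sL, of "length L - 1 - k" "length L - 1 - 1"] that by auto
    thus ?thesis using that by (simp add: rev_nth)
  qed
  have "length (filter (\<lambda>x. \<mu> \<le> x) L) \<le> 1"
  proof -
    have "length (filter (\<lambda>x. \<mu> \<le> x) L) = card {k. k < length L \<and> \<mu> \<le> L ! k}"
      by (rule length_filter_conv_card)
    also have "{k. k < length L \<and> \<mu> \<le> L ! k} \<subseteq> {0}"
      using le1 neg unfolding L_def[symmetric] by (force simp: not_le)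
    hence "card {k. k < length L \<and> \<mu> \<le> L ! k} \<le> card {0::nat}" by (intro card_mono) auto
    finally show ?thesis by simp
  qed
  moreover have "length (filter (\<lambda>x. \<mu> \<le> x) L) = length (filter (\<lambda>x. \<mu> \<le> x) ds)"
  proof -
    have "mset L = mset ds" unfolding L_def by simp
    hence "mset (filter (\<lambda>x. \<mu> \<le> x) L) = mset (filter (\<lambda>x. \<mu> \<le> x) ds)" by simp
    thus ?thesis by (metis size_mset)
  qed
  moreover have "length (filter (\<lambda>x. \<mu> \<le> x) ds) \<ge> 2"
  proof -
    have "length (filter (\<lambda>x. \<mu> \<le> x) ds) = card {k. k < length ds \<and> \<mu> \<le> ds ! k}"
      by (rule length_filter_conv_card)
    moreover have "{i, j} \<subseteq> {k. k < length ds \<and> \<mu> \<le> ds ! k}" using i j di dj by auto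
    hence "card {i,j} \<le> card {k. k < length ds \<and> \<mu> \<le> ds ! k}" by (intro card_mono) auto
    ultimately show ?thesis using ij by simp
  qed
  ultimately show False by simp
qed

lemma eigenvalues_desc_diag:
  fixes A Q D :: "real mat"
  assumes A: "A \<in> carrier_mat n n" and Q: "Q \<in> carrier_mat n n"
    and QQ: "transpose_mat Q * Q = 1\<^sub>m n" and D: "D = transpose_mat Q * A * Q"
    and dg: "diagonal_mat D"
  shows "eigenvalues_desc A = rev (sort (map (\<lambda>i. D $$ (i,i)) [0..<n]))"
proof -
  have D': "D \<in> carrier_mat n n" unfolding D using A Q by auto
  have QQ': "Q * transpose_mat Q = 1\<^sub>m n"
    using mat_mult_left_right_inverse[of "transpose_mat Q" n Q] Q QQ by auto
  have "Q * D * transpose_mat Q = (Q * transpose_mat Q) * A * (Q * transpose_mat Q)"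
    unfolding D using A Q by (simp add: assoc_mult_mat[of _ n n _ n _ n])
  also have "\<dots> = A" using QQ' A by simp
  finally have "similar_mat_wit A D Q (transpose_mat Q)"
    unfolding similar_mat_wit_def Let_def using A Q D' QQ QQ' by auto
  hence "similar_mat A D" unfolding similar_mat_def by blast
  hence cp: "char_poly A = char_poly D" by (rule char_poly_similar)
  have ut: "upper_triangular D" using dg D' unfolding diagonal_mat_def upper_triangular_def by auto
  have cpD: "char_poly D = (\<Prod>a\<leftarrow>diag_mat D. [:- a, 1:])"
    by (rule char_poly_upper_triangular[OF D' ut])
  have dm: "diag_mat D = map (\<lambda>i. D $$ (i,i)) [0..<n]" unfolding diag_mat_def using D' by simp
  have pr: "proots (\<Prod>a\<leftarrow>as. [:- a, 1:]) = mset as" for as :: "real list"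
  proof (induct as)
    case (Cons a as)
    have nz: "(\<Prod>a\<leftarrow>as. [:- a, 1:]) \<noteq> (0 :: real poly)"
      by (subst prod_list_zero_iff) auto
    have "proots (\<Prod>a\<leftarrow>a # as. [:- a, 1:]) = proots [:- a, 1:] + proots (\<Prod>a\<leftarrow>as. [:- a, 1:])"
      using nz by (simp only: list.map prod_list.Cons, subst proots_mult) auto
    also have "proots [:- a, 1:] = {#a#}" using proots_linear_factor[of "-a"] by simp
    finally show ?case using Cons by simp
  qed simp
  show ?thesis unfolding eigenvalues_desc_def cp cpD pr dm by (subst sorted_list_of_multiset_mset) (rule refl)
qed


lemma second_eig_bound:
  fixes A :: "real mat" and f g :: "real vec"
  assumes A: "A \<in> carrier_mat n n" and sym: "transpose_mat A = A"
    and f: "f \<in> carrier_vec n" "f \<noteq> 0\<^sub>v n" and g: "g \<in> carrier_vec n" "g \<noteq> 0\<^sub>v n"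
    and fg: "f \<bullet> g = 0" and fAg: "f \<bullet> (A *\<^sub>v g) = 0"
    and fAf: "f \<bullet> (A *\<^sub>v f) \<ge> \<mu> * (f \<bullet> f)" and gAg: "g \<bullet> (A *\<^sub>v g) \<ge> \<mu> * (g \<bullet> g)"
  shows "eigenvalues_desc A ! 1 \<ge> \<mu>"
proof -
  obtain Q where Q: "Q \<in> carrier_mat n n" and QQ: "transpose_mat Q * Q = 1\<^sub>m n"
    and dg: "diagonal_mat (transpose_mat Q * A * Q)" using real_spectral[OF A sym] by blast
  define D where "D = transpose_mat Q * A * Q"
  have D: "D \<in> carrier_mat n n" unfolding D_def using Q A by auto
  have QQ': "Q * transpose_mat Q = 1\<^sub>m n"
    using mat_mult_left_right_inverse[of "transpose_mat Q" n Q] Q QQ by auto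
  have ev: "eigenvalues_desc A = rev (sort (map (\<lambda>i. D $$ (i,i)) [0..<n]))"
    by (rule eigenvalues_desc_diag[OF A Q QQ D_def]) (use dg D_def in simp)
  define d where "d = (\<lambda>i. D $$ (i,i))"
  have QT: "transpose_mat Q \<in> carrier_mat n n" using Q by simp
  have zz: "(transpose_mat Q *\<^sub>v x) \<bullet> (transpose_mat Q *\<^sub>v x) = x \<bullet> x" if x: "x \<in> carrier_vec n" for x
  proof -
    have "(transpose_mat Q *\<^sub>v x) \<bullet> (transpose_mat Q *\<^sub>v x) = x \<bullet> (Q *\<^sub>v (transpose_mat Q *\<^sub>v x))"
      by (rule transpose_vec_mult_scalar[OF Q]) (use x Q in auto)
    also have "Q *\<^sub>v (transpose_mat Q *\<^sub>v x) = (Q * transpose_mat Q) *\<^sub>v x"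
      using Q x by (subst assoc_mult_mat_vec[of _ n n]) auto
    finally show ?thesis using QQ' x by simp
  qed
  have zDz: "(transpose_mat Q *\<^sub>v x) \<bullet> (D *\<^sub>v (transpose_mat Q *\<^sub>v x)) = x \<bullet> (A *\<^sub>v x)"
    if x: "x \<in> carrier_vec n" for x
  proof -
    have y: "transpose_mat Q *\<^sub>v x \<in> carrier_vec n" using QT x by simp
    have "D *\<^sub>v (transpose_mat Q *\<^sub>v x) = transpose_mat Q *\<^sub>v ((A * Q) *\<^sub>v (transpose_mat Q *\<^sub>v x))"
      unfolding D_def using Q A x y by (subst assoc_mult_mat_vec[of _ n n]) auto
    also have "(A * Q) *\<^sub>v (transpose_mat Q *\<^sub>v x) = A *\<^sub>v (Q *\<^sub>v (transpose_mat Q *\<^sub>v x))"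
      using Q A x y by (subst assoc_mult_mat_vec[of _ n n]) auto
    also have "Q *\<^sub>v (transpose_mat Q *\<^sub>v x) = (Q * transpose_mat Q) *\<^sub>v x"
      using Q x by (subst assoc_mult_mat_vec[of _ n n]) auto
    also have "(Q * transpose_mat Q) *\<^sub>v x = x" using QQ' x by simp
    finally have e: "D *\<^sub>v (transpose_mat Q *\<^sub>v x) = transpose_mat Q *\<^sub>v (A *\<^sub>v x)" .
    have "(transpose_mat Q *\<^sub>v x) \<bullet> (transpose_mat Q *\<^sub>v (A *\<^sub>v x)) = x \<bullet> (Q *\<^sub>v (transpose_mat Q *\<^sub>v (A *\<^sub>v x)))"
      by (rule transpose_vec_mult_scalar[OF Q]) (use x Q A in auto)
    also have "Q *\<^sub>v (transpose_mat Q *\<^sub>v (A *\<^sub>v x)) = A *\<^sub>v x"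
    proof -
      have "Q *\<^sub>v (transpose_mat Q *\<^sub>v (A *\<^sub>v x)) = (Q * transpose_mat Q) *\<^sub>v (A *\<^sub>v x)"
        using Q x A by (subst assoc_mult_mat_vec[of _ n n]) auto
      thus ?thesis using QQ' A x by simp
    qed
    finally show ?thesis unfolding e .
  qed
  have zDz_sum: "z \<bullet> (D *\<^sub>v z) = (\<Sum>i<n. d i * (z $ i)^2)" if z: "z \<in> carrier_vec n" for z
  proof -
    have "(D *\<^sub>v z) $ i = d i * z $ i" if i: "i < n" for i
    proof -
      have "(D *\<^sub>v z) $ i = (\<Sum>j<n. D $$ (i,j) * z $ j)"
        using D z i by (simp add: mult_mat_vec_def scalar_prod_def lessThan_atLeast0)
      also have "\<dots> = (\<Sum>j\<in>{i}. D $$ (i,j) * z $ j)"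
        by (rule sum.mono_neutral_right) (use i dg D in \<open>auto simp: D_def[symmetric] diagonal_mat_def\<close>)
      finally show ?thesis unfolding d_def by simp
    qed
    thus ?thesis using z D
      by (simp add: scalar_prod_def lessThan_atLeast0 power2_eq_square mult.commute mult.left_commute)
  qed
  have "\<exists>i j. i < n \<and> j < n \<and> i \<noteq> j \<and> \<mu> \<le> d i \<and> \<mu> \<le> d j"
  proof (rule ccontr)
    assume H0: "\<not> ?thesis"
    have H: "i = j" if "i < n" "j < n" "\<mu> \<le> d i" "\<mu> \<le> d j" for i j
      using H0 that by blast
    have lin: "transpose_mat Q *\<^sub>v (a \<cdot>\<^sub>v f + b \<cdot>\<^sub>v g) = a \<cdot>\<^sub>v (transpose_mat Q *\<^sub>v f) + b \<cdot>\<^sub>v (transpose_mat Q *\<^sub>v g)" for a b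
      using QT f g by (simp add: mult_add_distrib_mat_vec mult_mat_vec)
    obtain a b where ab: "a \<noteq> 0 \<or> b \<noteq> 0"
      and zk: "\<And>k. k < n \<Longrightarrow> \<mu> \<le> d k \<Longrightarrow> (transpose_mat Q *\<^sub>v (a \<cdot>\<^sub>v f + b \<cdot>\<^sub>v g)) $ k = 0"
    proof (cases "\<exists>k<n. \<mu> \<le> d k")
      case True
      then obtain k where k: "k < n" "\<mu> \<le> d k" by blast
      define p where "p = (transpose_mat Q *\<^sub>v f) $ k"
      define q where "q = (transpose_mat Q *\<^sub>v g) $ k"
      show ?thesis
      proof (cases "p = 0 \<and> q = 0")
        case True
        show ?thesis
        proof (rule that[of 1 0])
          fix k' assume "k' < n" "\<mu> \<le> d k'"
          hence "k' = k" using H k by blast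
          thus "(transpose_mat Q *\<^sub>v (1 \<cdot>\<^sub>v f + 0 \<cdot>\<^sub>v g)) $ k' = 0"
            using True k QT f g unfolding p_def q_def lin by simp
        qed simp
      next
        case False
        show ?thesis
        proof (rule that[of q "-p"])
          fix k' assume "k' < n" "\<mu> \<le> d k'"
          hence "k' = k" using H k by blast
          thus "(transpose_mat Q *\<^sub>v (q \<cdot>\<^sub>v f + (-p) \<cdot>\<^sub>v g)) $ k' = 0"
            using k QT f g unfolding p_def q_def lin by simp
        qed (use False in auto)
      qed
    next
      case False
      show ?thesis by (rule that[of 1 0]) (use False in auto)
    qed
    define x where "x = a \<cdot>\<^sub>v f + b \<cdot>\<^sub>v g"
    have x: "x \<in> carrier_vec n" unfolding x_def using f g by simp
    have gf: "g \<bullet> f = 0" using fg comm_scalar_prod[OF f(1) g(1)] by simp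
    have gAf: "g \<bullet> (A *\<^sub>v f) = 0"
    proof -
      have "(transpose_mat A *\<^sub>v f) \<bullet> g = f \<bullet> (A *\<^sub>v g)"
        by (rule transpose_vec_mult_scalar[OF A g(1) f(1)])
      thus ?thesis using sym fAg comm_scalar_prod[of g n "A *\<^sub>v f"] A f g by simp
    qed
    have ffp: "f \<bullet> f > 0" using conjugate_square_greater_0_vec[OF f(1)] f(2) by simp
    have ggp: "g \<bullet> g > 0" using conjugate_square_greater_0_vec[OF g(1)] g(2) by simp
    have xx: "x \<bullet> x = a^2 * (f \<bullet> f) + b^2 * (g \<bullet> g)"
      unfolding x_def using f g fg gf
      by (simp add: add_scalar_prod_distrib scalar_prod_add_distrib power2_eq_square)
    have xAx: "x \<bullet> (A *\<^sub>v x) = a^2 * (f \<bullet> (A *\<^sub>v f)) + b^2 * (g \<bullet> (A *\<^sub>v g))"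
      unfolding x_def using f g A fAg gAf
      by (simp add: mult_add_distrib_mat_vec mult_mat_vec add_scalar_prod_distrib scalar_prod_add_distrib power2_eq_square)
    have xxp: "x \<bullet> x > 0" unfolding xx using ab ffp ggp
      by (auto intro: add_pos_nonneg add_nonneg_pos)
    have "x \<bullet> (A *\<^sub>v x) \<ge> \<mu> * (x \<bullet> x)" unfolding xAx xx
    proof -
      have "a^2 * (\<mu> * (f \<bullet> f)) \<le> a^2 * (f \<bullet> (A *\<^sub>v f))" using fAf by (intro mult_left_mono) auto
      moreover have "b^2 * (\<mu> * (g \<bullet> g)) \<le> b^2 * (g \<bullet> (A *\<^sub>v g))" using gAg by (intro mult_left_mono) auto
      ultimately show "\<mu> * (a\<^sup>2 * (f \<bullet> f) + b\<^sup>2 * (g \<bullet> g)) \<le> a\<^sup>2 * (f \<bullet> (A *\<^sub>v f)) + b\<^sup>2 * (g \<bullet> (A *\<^sub>v g))"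
        by (simp add: algebra_simps)
    qed
    define z where "z = transpose_mat Q *\<^sub>v x"
    have z: "z \<in> carrier_vec n" unfolding z_def using QT x by simp
    have zk': "z $ k = 0" if "k < n" "\<mu> \<le> d k" for k
      using zk[OF that] unfolding z_def x_def .
    have "(\<Sum>i<n. d i * (z $ i)^2) \<ge> \<mu> * (\<Sum>i<n. (z $ i)^2)"
    proof -
      have "(\<Sum>i<n. (z $ i)^2) = z \<bullet> z" using z by (simp add: scalar_prod_def lessThan_atLeast0 power2_eq_square)
      also have "\<dots> = x \<bullet> x" unfolding z_def by (rule zz[OF x])
      finally have a1: "(\<Sum>i<n. (z $ i)^2) = x \<bullet> x" .
      have "(\<Sum>i<n. d i * (z $ i)^2) = x \<bullet> (A *\<^sub>v x)"
        using zDz_sum[OF z] zDz[OF x] unfolding z_def by simp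
      thus ?thesis using a1 \<open>x \<bullet> (A *\<^sub>v x) \<ge> \<mu> * (x \<bullet> x)\<close> by simp
    qed
    moreover have "(\<Sum>i<n. (\<mu> - d i) * (z $ i)^2) = \<mu> * (\<Sum>i<n. (z $ i)^2) - (\<Sum>i<n. d i * (z $ i)^2)"
      by (simp add: left_diff_distrib sum_subtractf sum_distrib_left)
    ultimately have le: "(\<Sum>i<n. (\<mu> - d i) * (z $ i)^2) \<le> 0" by linarith
    have nonneg: "\<forall>i\<in>{..<n}. 0 \<le> (\<mu> - d i) * (z $ i)^2"
    proof
      fix i assume "i \<in> {..<n}"
      thus "0 \<le> (\<mu> - d i) * (z $ i)^2" using zk'[of i] by (cases "\<mu> \<le> d i") auto
    qed
    hence "(\<Sum>i<n. (\<mu> - d i) * (z $ i)^2) \<ge> 0" by (intro sum_nonneg) auto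
    hence "(\<Sum>i<n. (\<mu> - d i) * (z $ i)^2) = 0" using le by linarith
    hence "\<forall>i\<in>{..<n}. (\<mu> - d i) * (z $ i)^2 = 0"
      using sum_nonneg_eq_0_iff[of "{..<n}" "\<lambda>i. (\<mu> - d i) * (z $ i)^2"] nonneg by simp
    hence "z $ i = 0" if "i < n" for i using zk'[of i] that by (cases "\<mu> \<le> d i") force+
    hence "z \<bullet> z = 0" using z by (simp add: scalar_prod_def)
    moreover have "z \<bullet> z = x \<bullet> x" unfolding z_def by (rule zz[OF x])
    ultimately show False using xxp by simp
  qed
  then obtain i j where ij: "i < n" "j < n" "i \<noteq> j" "\<mu> \<le> d i" "\<mu> \<le> d j" by blast
  show ?thesis unfolding ev
    by (rule sorted_desc_second[of i _ j]) (use ij in \<open>auto simp: d_def\<close>)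
qed


definition reach :: "(nat \<Rightarrow> nat \<Rightarrow> bool) \<Rightarrow> nat \<Rightarrow> nat \<Rightarrow> bool" where
  "reach E x y \<longleftrightarrow> (\<exists>xs. is_walk E xs \<and> hd xs = x \<and> last xs = y)"

lemma is_walk_nonempty: "is_walk E xs \<Longrightarrow> xs \<noteq> []"
  by (cases xs) auto

lemma is_walk_snoc: "is_walk E xs \<Longrightarrow> E (last xs) b \<Longrightarrow> is_walk E (xs @ [b])"
proof (induct xs)
  case (Cons a xs) thus ?case by (cases xs) auto
qed simp

lemma is_walk_snoc_D: "ys \<noteq> [] \<Longrightarrow> is_walk E (ys @ [b]) \<Longrightarrow> is_walk E ys \<and> E (last ys) b"
proof (induct ys)
  case (Cons a ys)
  show ?case
  proof (cases ys)
    case Nil thus ?thesis using Cons by simp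
  next
    case (Cons c cs)
    thus ?thesis using Cons.prems Cons.hyps by simp
  qed
qed simp

lemma is_walk_map: "is_walk E xs \<Longrightarrow> (\<And>a b. E a b \<Longrightarrow> E (s a) (s b)) \<Longrightarrow> is_walk E (map s xs)"
proof (induct xs)
  case (Cons a xs) thus ?case by (cases xs) auto
qed simp

lemma gdist_walk:
  assumes "reach E x y"
  shows "\<exists>xs. is_walk E xs \<and> hd xs = x \<and> last xs = y \<and> length xs = Suc (gdist E x y)"
proof -
  from assms obtain xs where xs: "is_walk E xs" "hd xs = x" "last xs = y" unfolding reach_def by blast
  then obtain k where "length xs = Suc k" using is_walk_nonempty[OF xs(1)] by (cases xs) auto
  hence "\<exists>xs. is_walk E xs \<and> hd xs = x \<and> last xs = y \<and> length xs = Suc k" using xs by blast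
  thus ?thesis unfolding gdist_def by (rule LeastI_ex[OF exI])
qed

lemma gdist_le:
  assumes "is_walk E xs" "hd xs = x" "last xs = y" "length xs = Suc k"
  shows "gdist E x y \<le> k"
  unfolding gdist_def by (rule Least_le) (use assms in blast)

lemma gdist_self: "gdist E x x = 0"
  using gdist_le[of E "[x]" x x 0] by simp

lemma gdist_0: "reach E x y \<Longrightarrow> gdist E x y = 0 \<Longrightarrow> x = y"
proof -
  assume r: "reach E x y" and z: "gdist E x y = 0"
  from gdist_walk[OF r] obtain xs where "is_walk E xs" "hd xs = x" "last xs = y" "length xs = Suc 0"
    using z by auto
  thus ?thesis by (cases xs) auto
qed

lemma gdist_edge:
  assumes "reach E x a" "E a b"
  shows "gdist E x b \<le> gdist E x a + 1"
proof -
  from gdist_walk[OF assms(1)] obtain xs where xs: "is_walk E xs" "hd xs = x" "last xs = a"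
    "length xs = Suc (gdist E x a)" by blast
  have ne: "xs \<noteq> []" using xs by auto
  show ?thesis
    by (rule gdist_le[of E "xs @ [b]"]) (use xs ne assms(2) is_walk_snoc in auto)
qed

lemma gdist_parent:
  assumes "reach E x i" "gdist E x i = Suc d"
  shows "\<exists>p. E p i \<and> gdist E x p \<le> d \<and> reach E x p"
proof -
  from gdist_walk[OF assms(1)] obtain xs where xs: "is_walk E xs" "hd xs = x" "last xs = i"
    "length xs = Suc (Suc d)" using assms(2) by auto
  obtain ys where ys: "xs = ys @ [i]" using xs
    by (metis append_butlast_last_id is_walk_nonempty)
  have ne: "ys \<noteq> []" using ys xs(4) by auto
  from is_walk_snoc_D[OF ne] xs(1) ys have w: "is_walk E ys" "E (last ys) i" by auto
  have h: "hd ys = x" using ys ne xs(2) by simp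
  have l: "length ys = Suc d" using ys xs(4) by simp
  show ?thesis
    by (rule exI[of _ "last ys"]) (use w h l gdist_le[of E ys x "last ys" d] in \<open>auto simp: reach_def\<close>)
qed

lemma gdist_map:
  assumes "reach E a b" "\<And>x y. E x y \<Longrightarrow> E (s x) (s y)"
  shows "gdist E (s a) (s b) \<le> gdist E a b \<and> reach E (s a) (s b)"
proof -
  from gdist_walk[OF assms(1)] obtain xs where xs: "is_walk E xs" "hd xs = a" "last xs = b"
    "length xs = Suc (gdist E a b)" by blast
  have ne: "xs \<noteq> []" using xs by auto
  have w: "is_walk E (map s xs)" using is_walk_map[OF xs(1)] assms(2) by blast
  have "hd (map s xs) = s a" "last (map s xs) = s b" using ne xs by (auto simp: hd_map last_map)
  thus ?thesis using w xs(4) gdist_le[of E "map s xs" "s a" "s b" "gdist E a b"]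
    unfolding reach_def by auto
qed


lemma powi_neg_nat: "(Q::real) powi (- int k) = 1 / Q ^ k"
  by (simp add: power_int_minus power_int_of_nat divide_inverse)

locale thm5_setup =
  fixes n :: nat and E :: "nat \<Rightarrow> nat \<Rightarrow> bool" and \<sigma> :: "nat \<Rightarrow> nat"
    and v :: nat and Q :: real and N :: "nat set"
  assumes graph: "simple_graph n E" and conn: "connected_graph n E"
    and inv: "graph_involution n E \<sigma>"
    and v: "v < n" "\<sigma> v \<noteq> v"
    and Q1: "Q \<ge> 1"
    and N: "pair_selection n \<sigma> N" "v \<in> N"
    and N_closer: "\<forall>x<n. \<sigma> x \<noteq> x \<and> gdist E v x < gdist E (\<sigma> v) x \<longrightarrow> x \<in> N"
begin

definition y where "y x = (if gdist E v x < gdist E (\<sigma> v) x then Q powi (- int (gdist E v x)) else 0)"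

lemma E_n: "E a b \<Longrightarrow> a < n \<and> b < n" using graph unfolding simple_graph_def by auto
lemma E_sym: "E a b \<Longrightarrow> E b a" using graph unfolding simple_graph_def by auto
lemma sig_n: "x < n \<Longrightarrow> \<sigma> x < n" using inv unfolding graph_involution_def by auto
lemma sig_sig: "x < n \<Longrightarrow> \<sigma> (\<sigma> x) = x" using inv unfolding graph_involution_def by auto
lemma sig_E: "E a b \<Longrightarrow> E (\<sigma> a) (\<sigma> b)" using inv unfolding graph_involution_def by auto
lemma sig_E_iff: "a < n \<Longrightarrow> b < n \<Longrightarrow> E (\<sigma> a) (\<sigma> b) \<longleftrightarrow> E a b"
  using sig_E[of "\<sigma> a" "\<sigma> b"] sig_E[of a b] sig_sig by auto
lemma reach_all: "a < n \<Longrightarrow> b < n \<Longrightarrow> reach E a b"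
  using conn unfolding connected_graph_def reach_def by auto
lemma gd_sig: "a < n \<Longrightarrow> b < n \<Longrightarrow> gdist E (\<sigma> a) (\<sigma> b) = gdist E a b"
proof -
  assume a: "a < n" and b: "b < n"
  have 1: "gdist E (\<sigma> a) (\<sigma> b) \<le> gdist E a b" using gdist_map[OF reach_all[OF a b], of \<sigma>] sig_E by blast
  have "gdist E (\<sigma> (\<sigma> a)) (\<sigma> (\<sigma> b)) \<le> gdist E (\<sigma> a) (\<sigma> b)"
    using gdist_map[OF reach_all[OF sig_n[OF a] sig_n[OF b]], of \<sigma>] sig_E by blast
  thus ?thesis using 1 sig_sig a b by simp
qed
lemma N_sub: "x \<in> N \<Longrightarrow> x < n \<and> \<sigma> x \<noteq> x" using N(1) unfolding pair_selection_def by auto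
lemma N_iff: "x < n \<Longrightarrow> \<sigma> x \<noteq> x \<Longrightarrow> x \<in> N \<longleftrightarrow> \<sigma> x \<notin> N"
  using N(1) unfolding pair_selection_def by auto
lemma finN: "finite N" by (rule finite_subset[of N "{..<n}"]) (use N_sub in auto)
lemma sigN_notN: "x \<in> N \<Longrightarrow> \<sigma> x \<notin> N" using N_iff N_sub by blast

lemma y_nonneg: "y x \<ge> 0" unfolding y_def powi_neg_nat using Q1 by auto
lemma y_v: "y v = 1"
proof -
  have "gdist E (\<sigma> v) v \<noteq> 0" using gdist_0[OF reach_all[OF sig_n[OF v(1)] v(1)]] v by auto
  thus ?thesis unfolding y_def gdist_self by simp
qed

lemma y_mono: "gdist E v a \<le> gdist E v b \<Longrightarrow> gdist E v a < gdist E (\<sigma> v) a \<Longrightarrow> gdist E v b < gdist E (\<sigma> v) b \<Longrightarrow> y b \<le> y a"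
proof -
  assume le: "gdist E v a \<le> gdist E v b" and lta: "gdist E v a < gdist E (\<sigma> v) a" and lt: "gdist E v b < gdist E (\<sigma> v) b"
  have "Q ^ gdist E v a \<le> Q ^ gdist E v b" using Q1 le by (intro power_increasing) auto
  moreover have "Q ^ gdist E v a > 0" using Q1 by simp
  ultimately show ?thesis unfolding y_def powi_neg_nat using lta lt
    by (simp add: frac_le)
qed

definition f where "f x = (if x \<in> N then y x else if \<sigma> x \<in> N then - y (\<sigma> x) else 0)"

lemma f_sig: "x < n \<Longrightarrow> f (\<sigma> x) = - f x"
proof -
  assume x: "x < n"
  show ?thesis
  proof (cases "x \<in> N")
    case True thus ?thesis using sigN_notN[OF True] sig_sig[OF x] unfolding f_def by simp
  next
    case False
    show ?thesis
    proof (cases "\<sigma> x \<in> N")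
      case True thus ?thesis using False sig_sig[OF x] unfolding f_def by simp
    next
      case False2: False
      thus ?thesis using False sig_sig[OF x] unfolding f_def by simp
    qed
  qed
qed

definition r where "r x = (\<Sum>j<n. (if E x j then 1 else 0) * f j)"

lemma bij_sig: "bij_betw \<sigma> {..<n} {..<n}"
  by (rule bij_betwI[of _ _ _ \<sigma>]) (auto simp: sig_n sig_sig)

lemma sum_sig: "(\<Sum>j<n. F (\<sigma> j)) = (\<Sum>j<n. F j)"
  using sum.reindex_bij_betw[OF bij_sig, of F] by simp

lemma r_sig: "x < n \<Longrightarrow> r (\<sigma> x) = - r x"
proof -
  assume x: "x < n"
  have "r (\<sigma> x) = (\<Sum>j<n. (if E (\<sigma> x) (\<sigma> j) then 1 else 0) * f (\<sigma> j))"
    unfolding r_def by (rule sum_sig[symmetric])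
  also have "\<dots> = (\<Sum>j<n. - ((if E x j then 1 else 0) * f j))"
    by (rule sum.cong) (auto simp: sig_E_iff x f_sig)
  finally show ?thesis unfolding r_def by (simp add: sum_negf)
qed

end


context thm5_setup begin

lemma y_alt: "y x = (if gdist E v x < gdist E (\<sigma> v) x then 1 / Q ^ (gdist E v x) else 0)"
  unfolding y_def powi_neg_nat ..

lemma r_sum_restrict:
  assumes Nb: "Nb = {u \<in> N \<union> \<sigma> ` N. E i u}"
  shows "r i = (\<Sum>j\<in>Nb. f j)"
proof -
  have fin: "finite Nb" unfolding Nb using finN by auto
  have sub: "Nb \<subseteq> {..<n}" unfolding Nb using N_sub sig_n by auto
  have "r i = (\<Sum>j<n. (if j \<in> Nb then f j else 0))"
    unfolding r_def
  proof (rule sum.cong[OF refl])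
    fix j assume j: "j \<in> {..<n}"
    show "(if E i j then 1 else 0) * f j = (if j \<in> Nb then f j else 0)"
    proof (cases "j \<in> Nb")
      case True thus ?thesis unfolding Nb by simp
    next
      case False
      have "f j = 0" if "E i j"
      proof -
        have "j \<notin> N" "j \<notin> \<sigma> ` N" using False that unfolding Nb by auto
        moreover have "\<sigma> j \<notin> N" using \<open>j \<notin> \<sigma> ` N\<close> sig_sig j by (metis image_eqI lessThan_iff)
        ultimately show ?thesis unfolding f_def by simp
      qed
      thus ?thesis using False by auto
    qed
  qed
  also have "\<dots> = (\<Sum>j\<in>{..<n} \<inter> Nb. f j)" using sum.inter_restrict[of "{..<n}" f Nb] by simp
  also have "{..<n} \<inter> Nb = Nb" using sub by auto
  finally show ?thesis .
qed

lemma bound_v: "y v * r v \<ge> -1"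
proof -
  have sv: "\<sigma> v < n" using sig_n v by simp
  have fsv: "f (\<sigma> v) = -1" using f_sig[OF v(1)] y_v N(2) unfolding f_def by simp
  have tm: "(if E v j then 1 else 0) * f j \<ge> (if j = \<sigma> v then -1 else 0)" if j: "j < n" for j
  proof (cases "j = \<sigma> v")
    case True thus ?thesis using fsv by simp
  next
    case False
    show ?thesis
    proof (cases "E v j")
      case Ej: True
      have "f j \<ge> 0"
      proof (cases "j \<in> N")
        case True thus ?thesis unfolding f_def using y_nonneg by simp
      next
        case jN: False
        show ?thesis
        proof (cases "\<sigma> j \<in> N")
          case True
          define u where "u = \<sigma> j"
          have u: "u < n" using sig_n j unfolding u_def by simp
          have "y u = 0"
          proof (rule ccontr)
            assume "y u \<noteq> 0"
            hence lt: "gdist E v u < gdist E (\<sigma> v) u" unfolding y_def by (auto split: if_splits)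
            have "gdist E (\<sigma> v) u = gdist E v j" unfolding u_def using gd_sig[OF v(1) j] .
            also have "\<dots> \<le> gdist E v v + 1" using gdist_edge[OF reach_all[OF v(1) v(1)] Ej] .
            finally have "gdist E v u = 0" using lt gdist_self[of E v] by simp
            hence "v = u" using gdist_0[OF reach_all[OF v(1) u]] by simp
            hence "j = \<sigma> v" unfolding u_def using sig_sig[OF j] by simp
            thus False using False by simp
          qed
          thus ?thesis unfolding f_def using jN True u_def by simp
        next
          case False thus ?thesis unfolding f_def using jN by simp
        qed
      qed
      thus ?thesis using False Ej by simp
    next
      case False thus ?thesis using \<open>j \<noteq> \<sigma> v\<close> by simp
    qed
  qed
  have "r v \<ge> (\<Sum>j<n. (if j = \<sigma> v then -1 else 0))"
    unfolding r_def by (rule sum_mono) (use tm in auto)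
  also have "(\<Sum>j<n. (if j = \<sigma> v then -1 else 0)) = (-1::real)"
    using sv by (simp add: sum.delta)
  finally show ?thesis using y_v by simp
qed

lemma bound_i:
  assumes i: "i \<in> N" "i \<noteq> v"
  shows "y i * r i \<ge> Q * (y i)^2 - (real (degree_in E (N \<union> \<sigma> ` N) i) - 1) * (y i)^2"
proof (cases "gdist E v i < gdist E (\<sigma> v) i")
  case False
  hence "y i = 0" unfolding y_def by simp
  thus ?thesis by simp
next
  case closer: True
  have iN: "i < n" using N_sub i by auto
  have sv: "\<sigma> v < n" using sig_n v by simp
  have "gdist E v i \<noteq> 0" using gdist_0[OF reach_all[OF v(1) iN]] i by auto
  then obtain d where d: "gdist E v i = Suc d" by (cases "gdist E v i") auto
  from gdist_parent[OF reach_all[OF v(1) iN] d] obtain p where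
    p: "E p i" "gdist E v p \<le> d" by blast
  have pn: "p < n" using E_n[OF p(1)] by simp
  have "gdist E v i \<le> gdist E v p + 1" using gdist_edge[OF reach_all[OF v(1) pn] p(1)] .
  hence dp: "gdist E v p = d" using p(2) d by simp
  have "gdist E (\<sigma> v) i \<le> gdist E (\<sigma> v) p + 1" using gdist_edge[OF reach_all[OF sv pn] p(1)] .
  hence pcloser: "gdist E v p < gdist E (\<sigma> v) p" using closer d dp by simp
  have "\<sigma> p \<noteq> p"
  proof
    assume "\<sigma> p = p"
    hence "gdist E (\<sigma> v) p = gdist E v p" using gd_sig[OF v(1) pn] by simp
    thus False using pcloser by simp
  qed
  hence pN: "p \<in> N" using N_closer pn pcloser by blast
  have yi: "y i = 1 / Q ^ Suc d" unfolding y_alt using closer d by simp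
  have yp: "y p = 1 / Q ^ d" unfolding y_alt using pcloser dp by simp
  have Qpos: "Q > 0" using Q1 by simp
  have ypi: "y p = Q * y i" unfolding yi yp using Qpos by (simp add: field_simps)
  define Nb where "Nb = {u \<in> N \<union> \<sigma> ` N. E i u}"
  have fin: "finite Nb" unfolding Nb_def using finN by auto
  have pNb: "p \<in> Nb" unfolding Nb_def using pN E_sym[OF p(1)] by simp
  have deg: "degree_in E (N \<union> \<sigma> ` N) i = card Nb" unfolding degree_in_def Nb_def by simp
  have fj: "f j \<ge> - y i" if j: "j \<in> Nb" for j
  proof (cases "j \<in> N")
    case True thus ?thesis unfolding f_def using y_nonneg[of j] y_nonneg[of i] by simp
  next
    case jN: False
    then obtain u where u: "u \<in> N" "j = \<sigma> u" using j unfolding Nb_def by auto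
    have un: "u < n" using N_sub u by auto
    have jn: "j < n" using sig_n un u by simp
    have su: "\<sigma> j = u" using sig_sig un u by simp
    have fju: "f j = - y u" unfolding f_def using jN su u by simp
    show ?thesis
    proof (cases "gdist E v u < gdist E (\<sigma> v) u")
      case ucl: True
      have Eij: "E j i" using j E_sym unfolding Nb_def by auto
      have "gdist E (\<sigma> v) i \<le> gdist E (\<sigma> v) j + 1" using gdist_edge[OF reach_all[OF sv jn] Eij] .
      also have "gdist E (\<sigma> v) j = gdist E v u" unfolding u(2) using gd_sig[OF v(1) un] .
      finally have "gdist E v i \<le> gdist E v u" using closer by simp
      hence "y u \<le> y i" using y_mono closer ucl by blast
      thus ?thesis using fju by simp
    next
      case False
      hence "y u = 0" unfolding y_def by simp
      thus ?thesis using fju y_nonneg[of i] by simp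
    qed
  qed
  have "r i = (\<Sum>j\<in>Nb. f j)" by (rule r_sum_restrict[OF Nb_def])
  also have "\<dots> = f p + (\<Sum>j\<in>Nb - {p}. f j)" using fin pNb by (simp add: sum.remove)
  also have "(\<Sum>j\<in>Nb - {p}. f j) \<ge> (\<Sum>j\<in>Nb - {p}. - y i)" by (rule sum_mono) (use fj in auto)
  hence "f p + (\<Sum>j\<in>Nb - {p}. f j) \<ge> f p - real (card (Nb - {p})) * y i" by simp
  finally have rb: "r i \<ge> f p - real (card (Nb - {p})) * y i" .
  have "r i \<ge> Q * y i - (real (card Nb) - 1) * y i"
    using ypi pN fin pNb unfolding f_def
  proof -
    have "card Nb \<ge> 1" using fin pNb by (metis card_0_eq empty_iff less_one not_le)
    hence "real (card Nb - Suc 0) = real (card Nb) - 1" by (simp add: of_nat_diff)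
    thus ?thesis using rb ypi pN fin pNb unfolding f_def by (simp add: card_Diff_singleton)
  qed
  hence "y i * r i \<ge> y i * (Q * y i - (real (card Nb) - 1) * y i)"
    using y_nonneg[of i] by (intro mult_left_mono) auto
  thus ?thesis unfolding deg by (simp add: power2_eq_square algebra_simps)
qed

end


context thm5_setup begin

lemma sum_double:
  fixes F :: "nat \<Rightarrow> real"
  assumes inv: "\<And>x. x < n \<Longrightarrow> F (\<sigma> x) = F x"
    and zero: "\<And>x. x < n \<Longrightarrow> x \<notin> N \<Longrightarrow> \<sigma> x \<notin> N \<Longrightarrow> F x = 0"
  shows "(\<Sum>i<n. F i) = 2 * (\<Sum>i\<in>N. F i)"
proof -
  have sub: "N \<union> \<sigma> ` N \<subseteq> {..<n}" using N_sub sig_n by auto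
  have fin: "finite (N \<union> \<sigma> ` N)" using finN by simp
  have zeros: "\<forall>i\<in>{..<n} - (N \<union> \<sigma> ` N). F i = 0"
  proof
    fix x assume x: "x \<in> {..<n} - (N \<union> \<sigma> ` N)"
    have "\<sigma> x \<notin> N" using x sig_sig by (metis DiffD1 DiffD2 UnI2 image_eqI lessThan_iff)
    thus "F x = 0" using zero x by auto
  qed
  have "(\<Sum>i<n. F i) = (\<Sum>i\<in>N \<union> \<sigma> ` N. F i)"
    using sum.mono_neutral_left[OF _ sub zeros] by simp
  also have "\<dots> = (\<Sum>i\<in>N. F i) + (\<Sum>i\<in>\<sigma> ` N. F i)"
  proof (rule sum.union_disjoint)
    show "N \<inter> \<sigma> ` N = {}"
    proof (rule ccontr)
      assume "N \<inter> \<sigma> ` N \<noteq> {}"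
      then obtain u where u: "u \<in> N" "\<sigma> u \<in> N" by auto
      thus False using sigN_notN by blast
    qed
  qed (use finN in auto)
  also have "(\<Sum>i\<in>\<sigma> ` N. F i) = (\<Sum>i\<in>N. F (\<sigma> i))"
  proof (rule sum.reindex[unfolded comp_def])
    show "inj_on \<sigma> N" by (rule inj_onI) (metis N_sub sig_sig)
  qed
  also have "\<dots> = (\<Sum>i\<in>N. F i)" by (rule sum.cong) (auto simp: inv N_sub)
  finally show ?thesis by simp
qed

lemma f_zero: "x \<notin> N \<Longrightarrow> \<sigma> x \<notin> N \<Longrightarrow> f x = 0" unfolding f_def by simp

lemma ff_sum: "(\<Sum>i<n. (f i)^2) = 2 * (\<Sum>i\<in>N. (y i)^2)"
proof -
  have "(\<Sum>i<n. (f i)^2) = 2 * (\<Sum>i\<in>N. (f i)^2)"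
    by (rule sum_double) (auto simp: f_sig f_zero)
  also have "(\<Sum>i\<in>N. (f i)^2) = (\<Sum>i\<in>N. (y i)^2)" by (rule sum.cong) (auto simp: f_def)
  finally show ?thesis .
qed

lemma fr_sum: "(\<Sum>i<n. f i * r i) = 2 * (\<Sum>i\<in>N. y i * r i)"
proof -
  have "(\<Sum>i<n. f i * r i) = 2 * (\<Sum>i\<in>N. f i * r i)"
    by (rule sum_double) (auto simp: f_sig r_sig f_zero)
  also have "(\<Sum>i\<in>N. f i * r i) = (\<Sum>i\<in>N. y i * r i)" by (rule sum.cong) (auto simp: f_def)
  finally show ?thesis .
qed

abbreviation S where "S \<equiv> (\<Sum>i\<in>N. (y i)^2)"
abbreviation Dsum where "Dsum \<equiv> (\<Sum>x\<in>N - {v}. (real (degree_in E (N \<union> \<sigma> ` N) x) - 1) * (y x)^2)"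

lemma S_ge1: "S \<ge> 1"
proof -
  have "S = (y v)^2 + (\<Sum>i\<in>N - {v}. (y i)^2)" using finN N(2) by (simp add: sum.remove)
  moreover have "(\<Sum>i\<in>N - {v}. (y i)^2) \<ge> 0" by (rule sum_nonneg) simp
  ultimately show ?thesis using y_v by simp
qed

lemma main_ineq: "Q + (\<Sum>i\<in>N. y i * r i) \<ge> Q * S - (1 + Dsum)"
proof -
  have 1: "(\<Sum>i\<in>N. y i * r i) = y v * r v + (\<Sum>i\<in>N - {v}. y i * r i)"
    using finN N(2) by (simp add: sum.remove)
  have 2: "(\<Sum>i\<in>N - {v}. y i * r i) \<ge> (\<Sum>i\<in>N - {v}. Q * (y i)^2 - (real (degree_in E (N \<union> \<sigma> ` N) i) - 1) * (y i)^2)"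
    by (rule sum_mono) (use bound_i in auto)
  have 3: "S = 1 + (\<Sum>i\<in>N - {v}. (y i)^2)" using finN N(2) y_v by (simp add: sum.remove)
  have 4: "(\<Sum>i\<in>N - {v}. Q * (y i)^2 - (real (degree_in E (N \<union> \<sigma> ` N) i) - 1) * (y i)^2)
     = Q * (\<Sum>i\<in>N - {v}. (y i)^2) - Dsum"
    by (simp add: sum_subtractf sum_distrib_left)
  show ?thesis using 1 2 3 4 bound_v by (simp add: algebra_simps)
qed

definition h where "h i j = (if E i j then 1 else 0) + (if i = j \<and> (i = v \<or> i = \<sigma> v) then Q else 0)"

lemma h_nonneg: "h i j \<ge> 0" unfolding h_def using Q1 by auto

lemma h_sig: "i < n \<Longrightarrow> j < n \<Longrightarrow> h (\<sigma> i) (\<sigma> j) = h i j"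
proof -
  assume i: "i < n" and j: "j < n"
  have "\<sigma> i = \<sigma> j \<longleftrightarrow> i = j" using sig_sig i j by metis
  moreover have "\<sigma> i = v \<longleftrightarrow> i = \<sigma> v" using sig_sig i v by metis
  moreover have "\<sigma> i = \<sigma> v \<longleftrightarrow> i = v" using sig_sig i v by metis
  ultimately show ?thesis unfolding h_def using sig_E_iff[OF i j] by auto
qed

definition qf where "qf u w = (\<Sum>i<n. u i * (\<Sum>j<n. h i j * w j))"

lemma qf_ff: "qf f f = 2 * (\<Sum>i\<in>N. y i * r i) + 2 * Q"
proof -
  have sv: "\<sigma> v < n" using sig_n v by simp
  have fv: "f v = 1" using y_v N(2) unfolding f_def by simp
  have fsv: "f (\<sigma> v) = -1" using f_sig[OF v(1)] fv by simp
  have inner: "(\<Sum>j<n. h i j * f j) = r i + (if i = v \<or> i = \<sigma> v then Q * f i else 0)" if i: "i < n" for i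
  proof -
    have "(\<Sum>j<n. h i j * f j) = (\<Sum>j<n. (if E i j then 1 else 0) * f j + (if j = i then (if i = v \<or> i = \<sigma> v then Q * f j else 0) else 0))"
      unfolding h_def by (rule sum.cong) (auto simp: algebra_simps)
    also have "\<dots> = r i + (\<Sum>j<n. (if j = i then (if i = v \<or> i = \<sigma> v then Q * f j else 0) else 0))"
      unfolding r_def by (rule sum.distrib)
    also have "(\<Sum>j<n. (if j = i then (if i = v \<or> i = \<sigma> v then Q * f j else 0) else 0)) = (if i = v \<or> i = \<sigma> v then Q * f i else 0)"
      using i by (subst sum.delta) auto
    finally show ?thesis .
  qed
  have "qf f f = (\<Sum>i<n. f i * r i + (if i = v \<or> i = \<sigma> v then Q * (f i)^2 else 0))"
    unfolding qf_def
  proof (rule sum.cong[OF refl])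
    fix i assume "i \<in> {..<n}"
    hence i: "i < n" by simp
    show "f i * (\<Sum>j<n. h i j * f j) = f i * r i + (if i = v \<or> i = \<sigma> v then Q * (f i)^2 else 0)"
      unfolding inner[OF i] by (simp add: distrib_left power2_eq_square mult.left_commute)
  qed
  also have "\<dots> = (\<Sum>i<n. f i * r i) + (\<Sum>i<n. (if i = v \<or> i = \<sigma> v then Q * (f i)^2 else 0))"
    by (rule sum.distrib)
  also have "(\<Sum>i<n. (if i = v \<or> i = \<sigma> v then Q * (f i)^2 else 0)) = (\<Sum>i\<in>{v, \<sigma> v}. Q * (f i)^2)"
    using sum.inter_restrict[of "{..<n}" "\<lambda>i. Q * (f i)^2" "{v, \<sigma> v}"] v sv
    by (simp add: Int_absorb1 insert_absorb)
  also have "\<dots> = 2 * Q" using v fv fsv by simp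
  finally show ?thesis using fr_sum by simp
qed

end


lemma vec_qf:
  fixes a :: "nat \<times> nat \<Rightarrow> real"
  shows "vec n u \<bullet> (mat n n a *\<^sub>v vec n w) = (\<Sum>i<n. u i * (\<Sum>j<n. a (i,j) * w j))"
  unfolding scalar_prod_def mult_mat_vec_def
  by (simp add: lessThan_atLeast0 row_def)

lemma vec_dot:
  fixes u w :: "nat \<Rightarrow> real"
  shows "vec n u \<bullet> vec n w = (\<Sum>i<n. u i * w i)"
  unfolding scalar_prod_def by (simp add: lessThan_atLeast0)

context thm5_setup begin

lemma qf_abs_ge: "qf (\<lambda>i. \<bar>f i\<bar>) (\<lambda>i. \<bar>f i\<bar>) \<ge> qf f f"
  unfolding qf_def sum_distrib_left
proof (intro sum_mono)
  fix i j
  have "f i * (h i j * f j) \<le> \<bar>f i * (h i j * f j)\<bar>" by simp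
  also have "\<dots> = \<bar>f i\<bar> * (h i j * \<bar>f j\<bar>)" using h_nonneg[of i j] by (simp add: abs_mult)
  finally show "f i * (h i j * f j) \<le> \<bar>f i\<bar> * (h i j * \<bar>f j\<bar>)" .
qed

lemma qf_f_abs: "qf f (\<lambda>i. \<bar>f i\<bar>) = 0"
proof -
  define T where "T i j = f i * (h i j * \<bar>f j\<bar>)" for i j
  have q: "qf f (\<lambda>i. \<bar>f i\<bar>) = (\<Sum>i<n. \<Sum>j<n. T i j)" unfolding qf_def T_def sum_distrib_left ..
  have "(\<Sum>i<n. \<Sum>j<n. T i j) = (\<Sum>i<n. \<Sum>j<n. T (\<sigma> i) (\<sigma> j))"
    by (subst sum_sig[of "\<lambda>i. \<Sum>j<n. T i (\<sigma> j)"]) (simp add: sum_sig)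
  also have "\<dots> = (\<Sum>i<n. \<Sum>j<n. - T i j)"
    by (intro sum.cong refl) (simp add: T_def f_sig h_sig)
  finally have "(\<Sum>i<n. \<Sum>j<n. T i j) = - (\<Sum>i<n. \<Sum>j<n. T i j)" by (simp add: sum_negf)
  thus ?thesis using q by simp
qed

lemma f_abs_dot: "(\<Sum>i<n. f i * \<bar>f i\<bar>) = 0"
proof -
  have "(\<Sum>i<n. f i * \<bar>f i\<bar>) = (\<Sum>i<n. f (\<sigma> i) * \<bar>f (\<sigma> i)\<bar>)" by (rule sum_sig[symmetric])
  also have "\<dots> = - (\<Sum>i<n. f i * \<bar>f i\<bar>)" by (simp add: f_sig sum_negf)
  finally show ?thesis by simp
qed

theorem main:
  "eigenvalues_desc (Hmat n E \<sigma> v Q) ! 1 \<ge> Q - (1 + Dsum) / S"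
proof -
  define A where "A = Hmat n E \<sigma> v Q"
  have Ah: "A = mat n n (\<lambda>(i,j). h i j)" unfolding A_def Hmat_def h_def ..
  have A: "A \<in> carrier_mat n n" unfolding Ah by simp
  have Asym: "transpose_mat A = A" unfolding Ah
    by (rule eq_matI) (auto simp: h_def E_sym)
  define fv where "fv = vec n f"
  define gv where "gv = vec n (\<lambda>i. \<bar>f i\<bar>)"
  have fv: "fv \<in> carrier_vec n" and gv: "gv \<in> carrier_vec n" unfolding fv_def gv_def by auto
  have fvv: "f v = 1" using y_v N(2) unfolding f_def by simp
  have fv0: "fv \<noteq> 0\<^sub>v n" using fvv v(1) unfolding fv_def by (metis index_vec index_zero_vec(1) zero_neq_one)
  have gv0: "gv \<noteq> 0\<^sub>v n" using fvv v(1) unfolding gv_def by (metis abs_one index_vec index_zero_vec(1) zero_neq_one)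
  have fg: "fv \<bullet> gv = 0" unfolding fv_def gv_def vec_dot using f_abs_dot .
  have fAg: "fv \<bullet> (A *\<^sub>v gv) = 0" unfolding fv_def gv_def Ah vec_qf using qf_f_abs unfolding qf_def by simp
  have ff: "fv \<bullet> fv = 2 * S" unfolding fv_def vec_dot using ff_sum by (simp add: power2_eq_square)
  have gg: "gv \<bullet> gv = 2 * S" unfolding gv_def vec_dot using ff_sum by (simp add: power2_eq_square abs_mult_self)
  have fAf: "fv \<bullet> (A *\<^sub>v fv) = qf f f" unfolding fv_def Ah vec_qf qf_def by simp
  have gAg: "gv \<bullet> (A *\<^sub>v gv) = qf (\<lambda>i. \<bar>f i\<bar>) (\<lambda>i. \<bar>f i\<bar>)" unfolding gv_def Ah vec_qf qf_def by simp
  define \<mu> where "\<mu> = Q - (1 + Dsum) / S"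
  have Spos: "S > 0" using S_ge1 by simp
  have muS: "\<mu> * S = Q * S - (1 + Dsum)" unfolding \<mu>_def using Spos by (simp add: field_simps)
  have key: "qf f f \<ge> \<mu> * (2 * S)"
    using qf_ff main_ineq muS by (simp add: algebra_simps)
  show ?thesis unfolding A_def[symmetric] \<mu>_def[symmetric]
  proof (rule second_eig_bound[OF A Asym fv fv0 gv gv0 fg fAg])
    show "\<mu> * (fv \<bullet> fv) \<le> fv \<bullet> (A *\<^sub>v fv)" using key ff fAf by simp
    show "\<mu> * (gv \<bullet> gv) \<le> gv \<bullet> (A *\<^sub>v gv)" using key gg gAg qf_abs_ge by simp
  qed
qed

end


theorem theorem5:
  fixes n :: nat and E :: "nat \<Rightarrow> nat \<Rightarrow> bool" and \<sigma> :: "nat \<Rightarrow> nat"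
    and v :: nat and Q :: real and N :: "nat set"
  assumes graph: "simple_graph n E" and conn: "connected_graph n E"
    and inv: "graph_involution n E \<sigma>"
    and v: "v < n" "\<sigma> v \<noteq> v"
    and Q: "Q > 2 * real (max_degree n E)" "Q \<ge> 1"
    and N: "pair_selection n \<sigma> N" "v \<in> N"
    and N_closer: "\<forall>x<n. \<sigma> x \<noteq> x \<and> gdist E v x < gdist E (\<sigma> v) x \<longrightarrow> x \<in> N"
  defines "y \<equiv> (\<lambda>x. if gdist E v x < gdist E (\<sigma> v) x then Q powi (- int (gdist E v x)) else 0)"
  shows "eigenvalues_desc (Hmat n E \<sigma> v Q) ! 1 \<ge>
     Q - (1 + (\<Sum>x\<in>N - {v}. (real (degree_in E (N \<union> \<sigma> ` N) x) - 1) * (y x)^2))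
           / (\<Sum>x\<in>N. (y x)^2)"
  proof -
  interpret L: thm5_setup n E \<sigma> v Q N
    using graph conn inv v Q(2) N N_closer by unfold_locales
  have yy: "y = L.y" unfolding y_def by (rule ext) (simp add: L.y_def)
  show ?thesis unfolding yy by (rule L.main)
qed

end
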